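(* Let $(b,c)$ be a weighted graph over $V$ and $m$ a measure on $V$. The following are equivalent: (i) for every $\alpha>0$ there is a nontrivial, nonnegative, bounded function $l$ on $V$ with $(\widetilde L+\alpha)l\le0$; (ii) for some $\alpha>0$ there is a nontrivial, nonnegative, bounded function $l$ on $V$ with $(\widetilde L+\alpha)l\le0$.
   Context: Let $V$ be a countably infinite set. A weighted graph over $V$ is a pair $(b,c)$ of maps $b:V\times V\to[0,\infty)$ and $c:V\to[0,\infty)$ with $b(x,x)=0$, $b(x,y)=b(y,x)$ and $\sum_{y\in V}b(x,y)<\infty$ for all $x,y\in V$. A measure on $V$ is a map $m:V\to(0,\infty)$. For $u$ with $\sum_y b(x,y)|u(y)|<\infty$ for all $x$ (in particular bounded $u$), $\widetilde Lu(x)=\frac1{m(x)}\sum_y b(x,y)(u(x)-u(y))+\frac{c(x)}{m(x)}u(x)$. *)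

theory Defs
  imports "HOL-Analysis.Analysis"
begin

text \<open>A weighted graph over the vertex type 'v (the vertex set V is UNIV :: 'v set).\<close>
definition weighted_graph :: "('v \<Rightarrow> 'v \<Rightarrow> real) \<Rightarrow> ('v \<Rightarrow> real) \<Rightarrow> bool" where
  "weighted_graph b c \<longleftrightarrow>
     (\<forall>x y. b x y \<ge> 0) \<and> (\<forall>x. c x \<ge> 0) \<and> (\<forall>x. b x x = 0) \<and>
     (\<forall>x y. b x y = b y x) \<and> (\<forall>x. (\<lambda>y. b x y) summable_on UNIV)"

definition is_measure :: "('v \<Rightarrow> real) \<Rightarrow> bool" where
  "is_measure m \<longleftrightarrow> (\<forall>x. m x > 0)"

text \<open>The formal operator L-tilde (applied to functions u with
  sum_y b(x,y)|u(y)| finite, in particular bounded u).\<close>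
definition Ltilde :: "('v \<Rightarrow> 'v \<Rightarrow> real) \<Rightarrow> ('v \<Rightarrow> real) \<Rightarrow> ('v \<Rightarrow> real)
                      \<Rightarrow> ('v \<Rightarrow> real) \<Rightarrow> 'v \<Rightarrow> real" where
  "Ltilde b c m u x = (1 / m x) * (\<Sum>\<^sub>\<infinity>y. b x y * (u x - u y)) + c x / m x * u x"

end

theory Submission
  imports Defs
begin

lemma summ_aux:
  fixes b :: "'v \<Rightarrow> 'v \<Rightarrow> real" and c :: "'v \<Rightarrow> real" and l :: "'v \<Rightarrow> real"
  assumes wg: "weighted_graph b c" and bd: "\<And>y. \<bar>l y\<bar> \<le> B"
  shows "(\<lambda>y. b x y * (l x - l y)) summable_on UNIV"
proof -
  have s: "(\<lambda>y. b x y) summable_on UNIV"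
    using wg unfolding weighted_graph_def by blast
  have nn: "\<And>y. b x y \<ge> 0"
    using wg unfolding weighted_graph_def by blast
  have s2: "(\<lambda>y. b x y * (2*B)) summable_on UNIV"
    using s by (rule summable_on_cmult_left)
  have "\<And>y. norm (b x y * (l x - l y)) \<le> b x y * (2*B)"
  proof -
    fix y
    have "\<bar>l x - l y\<bar> \<le> 2*B" using bd[of x] bd[of y] by linarith
    then show "norm (b x y * (l x - l y)) \<le> b x y * (2*B)"
      using nn[of y] by (simp add: abs_mult mult_left_mono)
  qed
  then have "(\<lambda>y. norm (b x y * (l x - l y))) summable_on UNIV"
    by (rule Infinite_Sum.abs_summable_on_comparison_test'[OF s2])
  then show ?thesis by (rule abs_summable_summable)
qed

definition good :: "('v \<Rightarrow> 'v \<Rightarrow> real) \<Rightarrow> ('v \<Rightarrow> real) \<Rightarrow> ('v \<Rightarrow> real) \<Rightarrow> real \<Rightarrow> ('v \<Rightarrow> real) \<Rightarrow> bool"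
  where "good b c m a l \<longleftrightarrow> l \<noteq> (\<lambda>_. 0) \<and> (\<forall>x. l x \<ge> 0) \<and> bounded (range l) \<and>
             (\<forall>x. Ltilde b c m l x + a * l x \<le> 0)"

lemma good_sq:
  assumes wg: "weighted_graph b c" and mm: "is_measure m" and g: "good b c m a l" and a: "a > 0"
  shows "good b c m (2*a) (\<lambda>x. (l x)^2)"
proof -
  have ne: "l \<noteq> (\<lambda>_. 0)" and nn: "\<And>x. l x \<ge> 0" and bdr: "bounded (range l)"
    and H: "\<And>x. Ltilde b c m l x + a * l x \<le> 0"
    using g unfolding good_def by auto
  obtain B where B: "\<And>y. \<bar>l y\<bar> \<le> B"
    using bdr unfolding bounded_iff by auto
  have B2: "\<And>y. \<bar>(l y)^2\<bar> \<le> B^2"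
    using B by (metis abs_ge_zero abs_power2 power2_abs power_mono)
  have ne2: "(\<lambda>x. (l x)^2) \<noteq> (\<lambda>_. 0)"
  proof
    assume "(\<lambda>x. (l x)^2) = (\<lambda>_. 0)"
    then have "\<And>x. l x = 0" by (metis power_zero_numeral zero_eq_power2)
    then show False using ne by auto
  qed
  have bd2: "bounded (range (\<lambda>x. (l x)^2))"
    unfolding bounded_iff using B2 by auto
  have bpos: "\<And>x y. b x y \<ge> 0" and cpos: "\<And>x. c x \<ge> 0" using wg unfolding weighted_graph_def by auto
  have mpos: "\<And>x. m x > 0" using mm unfolding is_measure_def by auto
  have main: "Ltilde b c m (\<lambda>x. (l x)^2) x + 2*a * (l x)^2 \<le> 0" for x
  proof -
    define S where "S = (\<Sum>\<^sub>\<infinity>y. b x y * (l x - l y))"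
    define S2 where "S2 = (\<Sum>\<^sub>\<infinity>y. b x y * ((l x)^2 - (l y)^2))"
    have h1: "S / m x + c x / m x * l x + a * l x \<le> 0"
      using H[of x] unfolding Ltilde_def S_def by simp
    have h1': "S + c x * l x + a * m x * l x \<le> 0"
    proof -
      have "m x * (S / m x + c x / m x * l x + a * l x) \<le> 0"
        using h1 mpos[of x] by (simp add: mult_nonneg_nonpos)
      moreover have "m x * (S / m x + c x / m x * l x + a * l x) = S + c x * l x + a * m x * l x"
        using mpos[of x] by (simp add: field_simps)
      ultimately show ?thesis by simp
    qed
    have sum1: "(\<lambda>y. b x y * (l x - l y)) summable_on UNIV" by (rule summ_aux[OF wg B])
    have sum2: "(\<lambda>y. b x y * ((l x)^2 - (l y)^2)) summable_on UNIV" by (rule summ_aux[OF wg B2])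
    have "S2 \<le> (\<Sum>\<^sub>\<infinity>y. 2 * l x * (b x y * (l x - l y)))"
      unfolding S2_def
    proof (rule infsum_mono[OF sum2])
      show "(\<lambda>y. 2 * l x * (b x y * (l x - l y))) summable_on UNIV"
        using sum1 by (rule summable_on_cmult_right)
      fix y
      have "(l x)^2 - (l y)^2 \<le> 2 * l x * (l x - l y)"
        using power2_eq_square[of "l x - l y"] zero_le_power2[of "l x - l y"]
        by (simp add: power2_eq_square algebra_simps)
      then show "b x y * ((l x)^2 - (l y)^2) \<le> 2 * l x * (b x y * (l x - l y))"
        using bpos[of x y] by (metis mult.left_commute mult_left_mono)
    qed
    also have "\<dots> = 2 * l x * S" unfolding S_def by (rule infsum_cmult_right') 
    finally have s2le: "S2 \<le> 2 * l x * S" .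
    have "2 * l x * S \<le> 2 * l x * (- c x * l x - a * m x * l x)"
      using h1' nn[of x] by (intro mult_left_mono) auto
    then have "S2 + c x * (l x)^2 + 2 * a * m x * (l x)^2 \<le> - c x * (l x)^2"
      using s2le by (simp add: power2_eq_square algebra_simps)
    also have "\<dots> \<le> 0" using cpos[of x] by simp
    finally have h2: "S2 + c x * (l x)^2 + 2 * a * m x * (l x)^2 \<le> 0" .
    have "Ltilde b c m (\<lambda>x. (l x)^2) x + 2*a * (l x)^2
        = (S2 + c x * (l x)^2 + 2 * a * m x * (l x)^2) / m x"
      unfolding Ltilde_def S2_def using mpos[of x] by (simp add: field_simps)
    also have "\<dots> \<le> 0" using h2 mpos[of x] by (simp add: divide_nonpos_pos)
    finally show ?thesis .
  qed
  show ?thesis unfolding good_def using ne2 bd2 main nn by auto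
qed

lemma good_pow:
  assumes wg: "weighted_graph b c" and mm: "is_measure m" and a: "a > 0"
    and g: "good b c m a l"
  shows "\<exists>l'. good b c m (2^n * a) l'"
proof (induction n)
  case 0 then show ?case using g by auto
next
  case (Suc n)
  then obtain l' where "good b c m (2^n * a) l'" by auto
  from good_sq[OF wg mm this] a have "good b c m (2 * (2^n * a)) (\<lambda>x. (l' x)^2)" by simp
  then show ?case by (auto simp: mult.assoc)
qed

lemma good_mono:
  assumes "good b c m a l" and "a' \<le> a"
  shows "good b c m a' l"
proof -
  have "\<And>x. Ltilde b c m l x + a' * l x \<le> Ltilde b c m l x + a * l x"
    using assms unfolding good_def by (simp add: mult_right_mono)
  then show ?thesis using assms unfolding good_def by (meson order_trans)
qed

theorem mainTheorem17:
  fixes b :: "'v \<Rightarrow> 'v \<Rightarrow> real" and c m :: "'v \<Rightarrow> real"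
  assumes "countable (UNIV :: 'v set)" and "infinite (UNIV :: 'v set)"
    and "weighted_graph b c" and "is_measure m"
  shows "(\<forall>\<alpha>>0. \<exists>l :: 'v \<Rightarrow> real. l \<noteq> (\<lambda>_. 0) \<and> (\<forall>x. l x \<ge> 0) \<and> bounded (range l) \<and>
             (\<forall>x. Ltilde b c m l x + \<alpha> * l x \<le> 0))
     \<longleftrightarrow> (\<exists>\<alpha>>0. \<exists>l :: 'v \<Rightarrow> real. l \<noteq> (\<lambda>_. 0) \<and> (\<forall>x. l x \<ge> 0) \<and> bounded (range l) \<and>
             (\<forall>x. Ltilde b c m l x + \<alpha> * l x \<le> 0))"
proof
  assume "\<forall>\<alpha>>0. \<exists>l :: 'v \<Rightarrow> real. l \<noteq> (\<lambda>_. 0) \<and> (\<forall>x. l x \<ge> 0) \<and> bounded (range l) \<and>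
             (\<forall>x. Ltilde b c m l x + \<alpha> * l x \<le> 0)"
  then show "\<exists>\<alpha>>0. \<exists>l :: 'v \<Rightarrow> real. l \<noteq> (\<lambda>_. 0) \<and> (\<forall>x. l x \<ge> 0) \<and> bounded (range l) \<and>
             (\<forall>x. Ltilde b c m l x + \<alpha> * l x \<le> 0)" by (meson zero_less_one)
next
  assume "\<exists>\<alpha>>0. \<exists>l :: 'v \<Rightarrow> real. l \<noteq> (\<lambda>_. 0) \<and> (\<forall>x. l x \<ge> 0) \<and> bounded (range l) \<and>
             (\<forall>x. Ltilde b c m l x + \<alpha> * l x \<le> 0)"
  then obtain a l where a: "a > 0" and g: "good b c m a l" unfolding good_def by blast
  show "\<forall>\<alpha>>0. \<exists>l :: 'v \<Rightarrow> real. l \<noteq> (\<lambda>_. 0) \<and> (\<forall>x. l x \<ge> 0) \<and> bounded (range l) \<and>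
             (\<forall>x. Ltilde b c m l x + \<alpha> * l x \<le> 0)"
  proof (intro allI impI)
    fix \<alpha> :: real assume "\<alpha> > 0"
    obtain n where n: "\<alpha> / a < 2^n" using real_arch_pow[of 2 "\<alpha> / a"] by auto
    have le: "\<alpha> \<le> 2^n * a" using n a by (simp add: field_simps)
    obtain l' where "good b c m (2^n * a) l'" using good_pow[OF assms(3,4) a g] by blast
    then have "good b c m \<alpha> l'" using le by (rule good_mono)
    then show "\<exists>l :: 'v \<Rightarrow> real. l \<noteq> (\<lambda>_. 0) \<and> (\<forall>x. l x \<ge> 0) \<and> bounded (range l) \<and>
             (\<forall>x. Ltilde b c m l x + \<alpha> * l x \<le> 0)" unfolding good_def by blast
  qed
qed

end
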